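(* Let $T(n) = (3n+1)/2^{v_2(3n+1)}$ for odd $n \ge 1$. For an odd positive integer $n \equiv 1 \pmod 4$, say that $n$ produces $(L,G) = (1,1)$ if $T(n) \equiv 3 \pmod 4$ and $T(T(n)) \equiv 1 \pmod 4$. For $n_0 = 64a + r$ with integer $a \ge 0$ and $r \in \{5,13,21,29,37,45,53,61\}$: (a) if $r = 29$, then $n_0$ produces $(L,G)=(1,1)$ for every $a$; (b) if $r = 21$, then $n_0$ produces $(L,G)=(1,1)$ if and only if $\mathrm{oddpart}(3a+1) \equiv 3 \pmod 8$; (c) if $r = 37$, then $n_0$ produces $(L,G)=(1,1)$ if and only if $a$ is odd; (d) if $r = 53$, then $n_0$ produces $(L,G)=(1,1)$ if and only if $a \equiv 1 \pmod 4$; (e) if $r \in \{5,13,45,61\}$, then $n_0$ does not produce $(L,G)=(1,1)$ for any $a$.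
   Context: $v_2$ is the $2$-adic valuation and $\mathrm{oddpart}(x) = x/2^{v_2(x)}$ for a positive integer $x$. In terms of the orbit $n_0, T(n_0), T^2(n_0),\dots$ with burst indicator $X_t = \mathbf{1}[n_t\equiv 1 \pmod 4]$, $(L,G)=(1,1)$ means the burst run starting at $n_0$ has length $L=1$ and the following gap run has length $G=1$. *)

theory Defs
  imports "HOL-Computational_Algebra.Primes"
begin

definition v2 :: "nat \<Rightarrow> nat" where
  "v2 x = multiplicity (2::nat) x"

definition oddpart :: "nat \<Rightarrow> nat" where
  "oddpart x = x div 2 ^ v2 x"

definition T :: "nat \<Rightarrow> nat" where
  "T n = oddpart (3 * n + 1)"

definition produces11 :: "nat \<Rightarrow> bool" where
  "produces11 n \<longleftrightarrow> T n mod 4 = 3 \<and> T (T n) mod 4 = 1"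

end

theory Submission
  imports Defs
begin

lemma v2_mult: "m > 0 \<Longrightarrow> v2 (2^k * m) = k + v2 m"
  unfolding v2_def
  by (simp add: prime_elem_multiplicity_mult_distrib)

lemma oddpart_mult: "m > 0 \<Longrightarrow> oddpart (2^k * m) = oddpart m"
  unfolding oddpart_def by (simp add: v2_mult power_add)

lemma oddpart_odd: "odd m \<Longrightarrow> oddpart m = m"
proof -
  assume "odd m"
  then have "multiplicity (2::nat) m = 0" by (simp add: not_dvd_imp_multiplicity_0)
  then show ?thesis unfolding oddpart_def v2_def by simp
qed

lemma oddpart_pow_odd: "odd m \<Longrightarrow> oddpart (2^k * m) = m"
  using oddpart_mult oddpart_odd by (metis odd_pos)

lemma odd_oddpart: assumes "x > 0" shows "odd (oddpart x)"
proof
  assume "even (oddpart x)"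
  then obtain c where c: "x div 2 ^ v2 x = 2 * c" unfolding oddpart_def by blast
  have "2 ^ v2 x dvd x" unfolding v2_def by (simp add: multiplicity_dvd)
  then have "x = 2 ^ v2 x * (2 * c)" using c by (metis dvd_mult_div_cancel)
  then have "x = 2 ^ Suc (v2 x) * c" by simp
  then have "2 ^ Suc (v2 x) dvd x" by (rule dvdI)
  then have "Suc (v2 x) \<le> v2 x" unfolding v2_def
    using assms by (subst (asm) power_dvd_iff_le_multiplicity) auto
  then show False by simp
qed

lemma T29: "T (64*a+29) = 24*a+11" unfolding T_def
  using oddpart_pow_odd[of "24*a+11" 3] by (simp add: algebra_simps)
lemma T21: "T (64*a+21) = oddpart (3*a+1)" unfolding T_def
  using oddpart_mult[of "3*a+1" 6] by (simp add: algebra_simps)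
lemma T37: "T (64*a+37) = 12*a+7" unfolding T_def
  using oddpart_pow_odd[of "12*a+7" 4] by (simp add: algebra_simps)
lemma T53: "T (64*a+53) = 6*a+5" unfolding T_def
  using oddpart_pow_odd[of "6*a+5" 5] by (simp add: algebra_simps)
lemma T5: "T (64*a+5) = 12*a+1" unfolding T_def
  using oddpart_pow_odd[of "12*a+1" 4] by (simp add: algebra_simps)
lemma T13: "T (64*a+13) = 24*a+5" unfolding T_def
  using oddpart_pow_odd[of "24*a+5" 3] by (simp add: algebra_simps)
lemma T45: "T (64*a+45) = 24*a+17" unfolding T_def
  using oddpart_pow_odd[of "24*a+17" 3] by (simp add: algebra_simps)
lemma T61: "T (64*a+61) = 24*a+23" unfolding T_def
  using oddpart_pow_odd[of "24*a+23" 3] by (simp add: algebra_simps)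

lemma T_3mod4: "m mod 4 = 3 \<Longrightarrow> T m = (3*m+1) div 2"
proof -
  assume h: "m mod 4 = 3"
  have e: "3*m+1 = 2 * ((3*m+1) div 2)" using h by presburger
  have o: "odd ((3*m+1) div 2)" using h by presburger
  have "oddpart (2^1 * ((3*m+1) div 2)) = (3*m+1) div 2" using o by (rule oddpart_pow_odd)
  then show ?thesis unfolding T_def using e by simp
qed

lemma TT29: "T (24*a+11) = 36*a+17"
proof -
  have "(24*a+11) mod 4 = (3::nat)" by presburger
  then show ?thesis by (simp add: T_3mod4)
qed
lemma TT37: "T (12*a+7) = 18*a+11"
proof -
  have "(12*a+7) mod 4 = (3::nat)" by presburger
  then show ?thesis by (simp add: T_3mod4)
qed
lemma TT61: "T (24*a+23) = 36*a+35"
proof -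
  have "(24*a+23) mod 4 = (3::nat)" by presburger
  then show ?thesis by (simp add: T_3mod4)
qed
lemma TT53: "odd a \<Longrightarrow> T (6*a+5) = 9*a+8"
proof -
  assume "odd a"
  then have "(6*a+5) mod 4 = (3::nat)" by presburger
  then show ?thesis by (simp add: T_3mod4)
qed

lemma mm: "(m::nat) mod 4 = (m mod 8) mod 4" by (simp add: mod_mod_cancel)
lemma key: assumes "m mod 4 = (3::nat)" shows "((3*m+1) div 2) mod 4 = 1 \<longleftrightarrow> m mod 8 = 3"
proof -
  define k where "k = m div 4"
  have k: "m = 4*k+3" using div_mult_mod_eq[of m 4] assms unfolding k_def by simp
  have e: "(3*m+1) div 2 = 6*k+5" unfolding k by simp
  have f1: "(6*k+5) mod 4 = 1 \<longleftrightarrow> even k" by presburger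
  have f2: "m mod 8 = 3 \<longleftrightarrow> even k" unfolding k by presburger
  show ?thesis unfolding e f1 f2 ..
qed

lemma P21: "produces11 (64 * a + 21) \<longleftrightarrow> oddpart (3 * a + 1) mod 8 = 3"
proof -
  define m where "m = oddpart (3*a+1)"
  have "(m mod 4 = 3 \<and> T m mod 4 = 1) = (m mod 8 = 3)"
  proof (cases "m mod 4 = 3")
    case True
    then have "T m = (3*m+1) div 2" by (rule T_3mod4)
    then show ?thesis using key[OF True] True by simp
  next
    case False
    then have "m mod 8 \<noteq> 3" using mm[of m] by auto
    then show ?thesis using False by simp
  qed
  then show ?thesis unfolding produces11_def T21 m_def[symmetric] .
qed

theorem proposition5p1:
  fixes a r :: nat
  shows "produces11 (64 * a + 29)
    \<and> (produces11 (64 * a + 21) \<longleftrightarrow> oddpart (3 * a + 1) mod 8 = 3)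
    \<and> (produces11 (64 * a + 37) \<longleftrightarrow> odd a)
    \<and> (produces11 (64 * a + 53) \<longleftrightarrow> a mod 4 = 1)
    \<and> (r \<in> {5, 13, 45, 61} \<longrightarrow> \<not> produces11 (64 * a + r))"
proof (intro conjI)
  have x1: "(24*a+11) mod 4 = 3" by presburger
  have x2: "(36*a+17) mod 4 = 1" by presburger
  show "produces11 (64 * a + 29)"
    unfolding produces11_def T29 TT29 using x1 x2 by simp
  show "produces11 (64 * a + 21) \<longleftrightarrow> oddpart (3 * a + 1) mod 8 = 3" by (rule P21)
  have y1: "(12*a+7) mod 4 = 3" by presburger
  have y2: "(18*a+11) mod 4 = 1 \<longleftrightarrow> odd a" by presburger
  show "produces11 (64 * a + 37) \<longleftrightarrow> odd a"
    unfolding produces11_def T37 TT37 y2 using y1 by simp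
  show "produces11 (64 * a + 53) \<longleftrightarrow> a mod 4 = 1"
  proof (cases "odd a")
    case True
    have z1: "(6*a+5) mod 4 = 3" using True by presburger
    have z2: "(9*a+8) mod 4 = 1 \<longleftrightarrow> a mod 4 = 1" by presburger
    show ?thesis unfolding produces11_def T53 TT53[OF True] z2 using z1 by simp
  next
    case False
    then have "(6*a+5) mod 4 \<noteq> 3" "a mod 4 \<noteq> 1" by presburger+
    then show ?thesis unfolding produces11_def T53 by simp
  qed
  show "r \<in> {5, 13, 45, 61} \<longrightarrow> \<not> produces11 (64 * a + r)"
  proof
    assume "r \<in> {5, 13, 45, 61}"
    then consider "r = 5" | "r = 13" | "r = 45" | "r = 61" by blast
    then show "\<not> produces11 (64 * a + r)"
    proof cases
      case 1
      have "(12*a+1) mod 4 \<noteq> 3" by presburger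
      then show ?thesis unfolding 1 produces11_def T5 by simp
    next
      case 2
      have "(24*a+5) mod 4 \<noteq> 3" by presburger
      then show ?thesis unfolding 2 produces11_def T13 by simp
    next
      case 3
      have "(24*a+17) mod 4 \<noteq> 3" by presburger
      then show ?thesis unfolding 3 produces11_def T45 by simp
    next
      case 4
      have "(36*a+35) mod 4 \<noteq> 1" by presburger
      then show ?thesis unfolding 4 produces11_def T61 TT61 by simp
    qed
  qed
qed

end
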